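(* Let $\mu$ be a Borel probability measure on $\mathbb{R}^n$ which is spectral with spectrum $\Lambda$, let $(U_\Lambda(a))_{a\in\mathbb{R}^n}$ be the group of local translations on $L^2(\mu)$, and let $W:L^2(\mu)\to L^2(G,\mu_{Bohr})$ be the isometry determined by $We_\lambda=\tilde e_\lambda$ for $\lambda\in\Lambda$. Then $\mathcal{U}_{Bohr}(a)W=WU_\Lambda(a)$ for all $a\in\mathbb{R}^n$.
   Context: $e_\lambda(x)=e^{2\pi i\lambda\cdot x}$. $\mu$ is spectral with spectrum $\Lambda$ if $\{e_\lambda\}_{\lambda\in\Lambda}$ is an orthogonal (hence orthonormal) basis of $L^2(\mu)$. The local translations are $U_\Lambda(a)f=\sum_{\lambda\in\Lambda}e^{2\pi ia\cdot\lambda}\langle f,e_\lambda\rangle e_\lambda$, where $\langle f,g\rangle=\int f\overline g\,d\mu$. The Bohr compactification $G$ is the set of all group homomorphisms $\chi:\mathbb{R}^n\to\mathbb{T}$ with pointwise multiplication and the topology of pointwise convergence, a compact abelian group with normalized Haar measure $\mu_{Bohr}$; $\tilde e_\lambda(\chi)=\chi(\lambda)$. For $a\in\mathbb{R}^n$, $(a\cdot\chi)(x)=e^{2\pi ia\cdot x}\chi(x)$ and $(\mathcal{U}_{Bohr}(a)f)(\chi)=f(a\cdot\chi)$ for $f\in L^2(G,\mu_{Bohr})$. *)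

theory Defs
  imports "HOL-Analysis.Analysis" "HOL-Probability.Probability"
begin

definition expo :: "real^'n \<Rightarrow> real^'n \<Rightarrow> complex" where
  "expo l x = exp (2 * complex_of_real pi * \<i> * complex_of_real (l \<bullet> x))"

text \<open>Square integrable (measurable) functions, i.e. representatives of L^2(M).\<close>
definition sq_int :: "'a measure \<Rightarrow> ('a \<Rightarrow> complex) \<Rightarrow> bool" where
  "sq_int M f \<longleftrightarrow> f \<in> borel_measurable M \<and> integrable M (\<lambda>x. (cmod (f x))^2)"

definition l2_inner :: "'a measure \<Rightarrow> ('a \<Rightarrow> complex) \<Rightarrow> ('a \<Rightarrow> complex) \<Rightarrow> complex" where
  "l2_inner M f g = (LINT x|M. f x * cnj (g x))"

text \<open>Unconditional convergence in L^2(M) of the family (h i), i in I, to g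
  (limit of partial sums over the net of finite subsets of I).\<close>
definition l2_has_sum :: "'a measure \<Rightarrow> ('i \<Rightarrow> 'a \<Rightarrow> complex) \<Rightarrow> 'i set \<Rightarrow> ('a \<Rightarrow> complex) \<Rightarrow> bool" where
  "l2_has_sum M h I g \<longleftrightarrow>
     ((\<lambda>S. LINT x|M. (cmod (g x - (\<Sum>i\<in>S. h i x)))^2) \<longlongrightarrow> 0) (finite_subsets_at_top I)"

text \<open>mu is spectral with spectrum Lambda: {e_lambda} is an orthonormal basis of L^2(mu)
  (orthonormal, and complete: only the zero class is orthogonal to all e_lambda).\<close>
definition spectral :: "(real^'n) measure \<Rightarrow> (real^'n) set \<Rightarrow> bool" where
  "spectral \<mu> \<Lambda> \<longleftrightarrow>
     (\<forall>l\<in>\<Lambda>. \<forall>l'\<in>\<Lambda>. l2_inner \<mu> (expo l) (expo l') = (if l = l' then 1 else 0)) \<and>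
     (\<forall>f. sq_int \<mu> f \<and> (\<forall>l\<in>\<Lambda>. l2_inner \<mu> f (expo l) = 0) \<longrightarrow> (AE x in \<mu>. f x = 0))"

definition local_transl :: "(real^'n) measure \<Rightarrow> (real^'n) set \<Rightarrow> real^'n
     \<Rightarrow> (real^'n \<Rightarrow> complex) \<Rightarrow> (real^'n \<Rightarrow> complex) \<Rightarrow> bool" where
  "local_transl \<mu> \<Lambda> a f g \<longleftrightarrow>
     l2_has_sum \<mu> (\<lambda>l x. expo l a * l2_inner \<mu> f (expo l) * expo l x) \<Lambda> g"

text \<open>Bohr compactification: group homomorphisms R^n -> T (T the unit circle in C),
  as a subset of the function space with the product (= pointwise convergence) topology.\<close>
definition bohr_group :: "(real^'n \<Rightarrow> complex) set" where
  "bohr_group = {h. (\<forall>x. cmod (h x) = 1) \<and> (\<forall>x y. h (x + y) = h x * h y)}"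

definition bohr_act :: "real^'n \<Rightarrow> (real^'n \<Rightarrow> complex) \<Rightarrow> (real^'n \<Rightarrow> complex)" where
  "bohr_act a h = (\<lambda>x. expo a x * h x)"

text \<open>M is the normalized Haar measure on G: a translation invariant Radon (regular)
  probability measure on the Borel sets of G.\<close>
definition bohr_haar :: "(real^'n \<Rightarrow> complex) measure \<Rightarrow> bool" where
  "bohr_haar M \<longleftrightarrow>
     space M = bohr_group \<and>
     sets M = sets (restrict_space borel bohr_group) \<and>
     prob_space M \<and>
     (\<forall>h0\<in>bohr_group. \<forall>A\<in>sets M.
        (\<lambda>h x. h0 x * h x) -` A \<inter> bohr_group \<in> sets M \<and>
        emeasure M ((\<lambda>h x. h0 x * h x) -` A \<inter> bohr_group) = emeasure M A) \<and>
     (\<forall>A\<in>sets M. emeasure M A =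
        (INF V\<in>{V. open V \<and> A \<subseteq> V}. emeasure M (V \<inter> bohr_group))) \<and>
     (\<forall>V. open V \<longrightarrow> emeasure M (V \<inter> bohr_group) =
        (SUP K\<in>{K. compact K \<and> K \<subseteq> V \<inter> bohr_group}. emeasure M K))"

end

theory Submission
  imports Defs
begin


lemma cnj_meas: "f \<in> borel_measurable M \<Longrightarrow> (\<lambda>x. cnj (f x)) \<in> borel_measurable M"
  by (rule borel_measurable_continuous_on) (auto intro: continuous_intros)

lemma sq_sum_le: "((a::real) + b * c)^2 \<le> 2 * a^2 + 2 * b^2 * c^2"
proof -
  have "0 \<le> (a - b * c)^2" by simp
  thus ?thesis by (simp add: power2_eq_square algebra_simps)
qed

lemma prod_le_sq: "(a::real) \<ge> 0 \<Longrightarrow> b \<ge> 0 \<Longrightarrow> a * b \<le> a^2 + b^2"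
proof -
  assume "a \<ge> 0" "b \<ge> 0"
  have "0 \<le> (a - b)^2" by simp
  hence "2 * (a * b) \<le> a^2 + b^2" by (simp add: power2_eq_square algebra_simps)
  moreover have "0 \<le> a * b" using \<open>a \<ge> 0\<close> \<open>b \<ge> 0\<close> by simp
  ultimately show ?thesis by linarith
qed

lemma sq_int_lin:
  assumes u: "sq_int M u" and v: "sq_int M v"
  shows "sq_int M (\<lambda>x. u x + c * v x)"
proof -
  have um: "u \<in> borel_measurable M" and ui: "integrable M (\<lambda>x. (cmod (u x))^2)"
    using u by (auto simp: sq_int_def)
  have vm: "v \<in> borel_measurable M" and vi: "integrable M (\<lambda>x. (cmod (v x))^2)"
    using v by (auto simp: sq_int_def)
  have m: "(\<lambda>x. u x + c * v x) \<in> borel_measurable M" using um vm by measurable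
  have b: "norm ((cmod (u x + c * v x))^2) \<le> norm (2 * (cmod (u x))^2 + 2 * (cmod c)^2 * (cmod (v x))^2)" for x
  proof -
    have "cmod (u x + c * v x) \<le> cmod (u x) + cmod c * cmod (v x)"
      by (metis norm_mult norm_triangle_ineq)
    hence "(cmod (u x + c * v x))^2 \<le> (cmod (u x) + cmod c * cmod (v x))^2"
      by (simp add: power_mono)
    also have "\<dots> \<le> 2 * (cmod (u x))^2 + 2 * (cmod c)^2 * (cmod (v x))^2"
      by (rule sq_sum_le)
    finally show ?thesis by simp
  qed
  have "integrable M (\<lambda>x. 2 * (cmod (u x))^2 + 2 * (cmod c)^2 * (cmod (v x))^2)"
    using ui vi by auto
  hence "integrable M (\<lambda>x. (cmod (u x + c * v x))^2)"
    by (rule Bochner_Integration.integrable_bound) (use m b in \<open>auto intro!: always_eventually\<close>)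
  thus ?thesis using m by (simp add: sq_int_def)
qed

lemma sq_int_zero: "sq_int M (\<lambda>x. 0)" by (simp add: sq_int_def)

lemma sq_int_diff:
  assumes "sq_int M u" "sq_int M v" shows "sq_int M (\<lambda>x. u x - v x)"
  using sq_int_lin[OF assms, of "-1"] by simp

lemma sq_int_add:
  assumes "sq_int M u" "sq_int M v" shows "sq_int M (\<lambda>x. u x + v x)"
  using sq_int_lin[OF assms, of "1"] by simp

lemma sq_int_sum:
  assumes "\<And>i. i \<in> A \<Longrightarrow> sq_int M (e i)"
  shows "sq_int M (\<lambda>x. \<Sum>i\<in>A. d i * e i x)"
  using assms
proof (induction A rule: infinite_finite_induct)
  case (insert i A)
  have "sq_int M (\<lambda>x. (\<Sum>i\<in>A. d i * e i x) + d i * e i x)"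
    by (rule sq_int_lin) (use insert in auto)
  thus ?case using insert by (simp add: add.commute)
qed (auto simp: sq_int_zero)

lemma sq_int_prod:
  assumes u: "sq_int M u" and v: "sq_int M v"
  shows "integrable M (\<lambda>x. u x * cnj (v x))"
proof -
  have um: "u \<in> borel_measurable M" and ui: "integrable M (\<lambda>x. (cmod (u x))^2)"
    using u by (auto simp: sq_int_def)
  have vm: "v \<in> borel_measurable M" and vi: "integrable M (\<lambda>x. (cmod (v x))^2)"
    using v by (auto simp: sq_int_def)
  have "integrable M (\<lambda>x. (cmod (u x))^2 + (cmod (v x))^2)" using ui vi by auto
  moreover have "norm (u x * cnj (v x)) \<le> norm ((cmod (u x))^2 + (cmod (v x))^2)" for x
  proof -
    have "norm (u x * cnj (v x)) = cmod (u x) * cmod (v x)" by (simp add: norm_mult)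
    also have "\<dots> \<le> (cmod (u x))^2 + (cmod (v x))^2"
      by (rule prod_le_sq) simp_all
    finally show ?thesis by simp
  qed
  ultimately show ?thesis
    using Bochner_Integration.integrable_bound[where M=M and f="\<lambda>x. (cmod (u x))^2 + (cmod (v x))^2"
       and g="\<lambda>x. u x * cnj (v x)"] borel_measurable_times[OF um cnj_meas[OF vm]]
    by (simp del: norm_mult)
qed

lemma l2_inner_lin:
  assumes "sq_int M u" "sq_int M v" "sq_int M w"
  shows "l2_inner M (\<lambda>x. u x + c * v x) w = l2_inner M u w + c * l2_inner M v w"
proof -
  have "l2_inner M (\<lambda>x. u x + c * v x) w = (LINT x|M. u x * cnj (w x) + c * (v x * cnj (w x)))"
    unfolding l2_inner_def by (simp add: algebra_simps)
  also have "\<dots> = l2_inner M u w + c * l2_inner M v w"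
    unfolding l2_inner_def using sq_int_prod[OF assms(1,3)] sq_int_prod[OF assms(2,3)] by simp
  finally show ?thesis .
qed

lemma l2_inner_cnj: "l2_inner M v u = cnj (l2_inner M u v)"
  unfolding l2_inner_def by (simp add: mult.commute Bochner_Integration.integral_cnj[symmetric])

lemma l2_inner_sum:
  assumes "\<And>i. i \<in> A \<Longrightarrow> sq_int M (e i)" "sq_int M w"
  shows "l2_inner M (\<lambda>x. \<Sum>i\<in>A. d i * e i x) w = (\<Sum>i\<in>A. d i * l2_inner M (e i) w)"
  using assms
proof (induction A rule: infinite_finite_induct)
  case (insert i A)
  have "l2_inner M (\<lambda>x. (\<Sum>i\<in>A. d i * e i x) + d i * e i x) w
      = l2_inner M (\<lambda>x. \<Sum>i\<in>A. d i * e i x) w + d i * l2_inner M (e i) w"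
    by (rule l2_inner_lin) (use insert.prems in \<open>auto intro!: sq_int_sum\<close>)
  thus ?case using insert by (simp add: add.commute)
qed (auto simp: l2_inner_def)

lemma l2_norm_inner:
  "complex_of_real (LINT x|M. (cmod (u x))^2) = l2_inner M u u"
proof -
  have "(\<lambda>x. u x * cnj (u x)) = (\<lambda>x. complex_of_real ((cmod (u x))^2))"
    by (simp only: complex_norm_square)
  thus ?thesis unfolding l2_inner_def by (simp only: integral_complex_of_real)
qed

lemma l2_norm_diff:
  assumes "sq_int M u" "sq_int M v"
  shows "(LINT x|M. (cmod (u x - v x))^2) = (LINT x|M. (cmod (u x))^2) + (LINT x|M. (cmod (v x))^2)
          - 2 * Re (l2_inner M u v)"
proof -
  have i1: "integrable M (\<lambda>x. (cmod (u x))^2)" "integrable M (\<lambda>x. (cmod (v x))^2)"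
    using assms by (auto simp: sq_int_def)
  define r where "r = (\<lambda>x. Re (u x * cnj (v x)))"
  have i2: "integrable M r" unfolding r_def
    by (rule integrable_Re[OF sq_int_prod[OF assms]])
  have pt: "(cmod (u x - v x))^2 = (cmod (u x))^2 + (cmod (v x))^2 - 2 * r x" for x
    unfolding cmod_power2 r_def by (simp add: algebra_simps power2_eq_square)
  have "Re (l2_inner M u v) = (LINT x|M. r x)"
    unfolding l2_inner_def r_def by (rule integral_Re[symmetric]) (rule sq_int_prod[OF assms])
  thus ?thesis unfolding pt using i1 i2 by simp
qed



locale onb =
  fixes M :: "'a measure" and e :: "'i \<Rightarrow> 'a \<Rightarrow> complex" and L :: "'i set"
  assumes e_sq: "\<And>l. l \<in> L \<Longrightarrow> sq_int M (e l)"
    and e_on: "\<And>l l'. l \<in> L \<Longrightarrow> l' \<in> L \<Longrightarrow> l2_inner M (e l) (e l') = (if l = l' then 1 else 0)"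
begin

lemma coef_sum:
  assumes "finite A" "A \<subseteq> L" "m \<in> L"
  shows "l2_inner M (\<lambda>x. \<Sum>l\<in>A. d l * e l x) (e m) = (if m \<in> A then d m else 0)"
proof -
  have "l2_inner M (\<lambda>x. \<Sum>l\<in>A. d l * e l x) (e m) = (\<Sum>l\<in>A. d l * l2_inner M (e l) (e m))"
    by (rule l2_inner_sum) (use assms e_sq in auto)
  also have "\<dots> = (\<Sum>l\<in>A. if l = m then d l else 0)"
    by (rule sum.cong) (use assms e_on in auto)
  also have "\<dots> = (if m \<in> A then d m else 0)"
    using assms(1) by (simp add: sum.delta')
  finally show ?thesis .
qed

lemma sq_sum: "finite A \<Longrightarrow> A \<subseteq> L \<Longrightarrow> sq_int M (\<lambda>x. \<Sum>l\<in>A. d l * e l x)"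
  by (rule sq_int_sum) (use e_sq in auto)

lemma pyth:
  assumes "finite A" "A \<subseteq> L"
  shows "(LINT x|M. (cmod (\<Sum>l\<in>A. d l * e l x))^2) = (\<Sum>l\<in>A. (cmod (d l))^2)"
proof -
  let ?F = "\<lambda>x. \<Sum>l\<in>A. d l * e l x"
  have "complex_of_real (LINT x|M. (cmod (?F x))^2) = l2_inner M ?F ?F"
    by (rule l2_norm_inner)
  also have "\<dots> = (\<Sum>l\<in>A. d l * l2_inner M (e l) ?F)"
    by (rule l2_inner_sum) (use assms e_sq sq_sum in auto)
  also have "\<dots> = (\<Sum>l\<in>A. d l * cnj (d l))"
  proof (rule sum.cong)
    fix l assume "l \<in> A"
    have "l2_inner M (e l) ?F = cnj (l2_inner M ?F (e l))" by (rule l2_inner_cnj)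
    also have "\<dots> = cnj (d l)" using coef_sum[OF assms, of l d] \<open>l \<in> A\<close> assms by auto
    finally show "d l * l2_inner M (e l) ?F = d l * cnj (d l)" by simp
  qed simp
  also have "\<dots> = complex_of_real (\<Sum>l\<in>A. (cmod (d l))^2)"
    by (simp only: of_real_sum complex_norm_square)
  finally show ?thesis by (simp only: of_real_eq_iff)
qed

lemma bessel_eq:
  assumes f: "sq_int M f" and "finite A" "A \<subseteq> L"
  shows "(LINT x|M. (cmod (f x - (\<Sum>l\<in>A. l2_inner M f (e l) * e l x)))^2)
          = (LINT x|M. (cmod (f x))^2) - (\<Sum>l\<in>A. (cmod (l2_inner M f (e l)))^2)"
proof -
  define c where "c l = l2_inner M f (e l)" for l
  let ?F = "\<lambda>x. \<Sum>l\<in>A. c l * e l x"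
  have sF: "sq_int M ?F" using sq_sum assms by auto
  have "l2_inner M f ?F = cnj (l2_inner M ?F f)" by (rule l2_inner_cnj)
  also have "l2_inner M ?F f = (\<Sum>l\<in>A. c l * l2_inner M (e l) f)"
    by (rule l2_inner_sum) (use assms e_sq in auto)
  also have "\<dots> = (\<Sum>l\<in>A. c l * cnj (c l))"
    by (rule sum.cong) (simp_all add: c_def l2_inner_cnj[of M f "e _"])
  also have "\<dots> = complex_of_real (\<Sum>l\<in>A. (cmod (c l))^2)"
    by (simp only: of_real_sum complex_norm_square)
  finally have ip: "l2_inner M f ?F = complex_of_real (\<Sum>l\<in>A. (cmod (c l))^2)" by simp
  have "(LINT x|M. (cmod (f x - ?F x))^2) = (LINT x|M. (cmod (f x))^2) + (LINT x|M. (cmod (?F x))^2)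
          - 2 * Re (l2_inner M f ?F)"
    by (rule l2_norm_diff[OF f sF])
  also have "(LINT x|M. (cmod (?F x))^2) = (\<Sum>l\<in>A. (cmod (c l))^2)" by (rule pyth) (use assms in auto)
  finally show ?thesis unfolding c_def[symmetric] ip by simp
qed

end

lemma L1_le_L2:
  assumes P: "prob_space M" and w: "sq_int M w"
  shows "integrable M (\<lambda>x. cmod (w x))"
    and "(LINT x|M. cmod (w x)) \<le> sqrt (LINT x|M. (cmod (w x))^2)"
proof -
  interpret prob_space M by (rule P)
  have wm: "w \<in> borel_measurable M" and wi: "integrable M (\<lambda>x. (cmod (w x))^2)"
    using w by (auto simp: sq_int_def)
  have b: "norm (cmod (w x)) \<le> norm (1 + (cmod (w x))^2)" for x
  proof -
    have "cmod (w x) \<le> 1 + (cmod (w x))^2"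
      using prod_le_sq[of 1 "cmod (w x)"] by simp
    thus ?thesis by simp
  qed
  have i1: "integrable M (\<lambda>x. 1 + (cmod (w x))^2)" using wi by simp
  show iw: "integrable M (\<lambda>x. cmod (w x))"
    using Bochner_Integration.integrable_bound[OF i1, of "\<lambda>x. cmod (w x)"] wm b by simp
  define N where "N = (LINT x|M. (cmod (w x))^2)"
  have N0: "N \<ge> 0" unfolding N_def by simp
  have key: "(LINT x|M. cmod (w x)) \<le> t / 2 + N / (2 * t)" if t: "t > 0" for t
  proof -
    have pt: "cmod (w x) \<le> t / 2 + (cmod (w x))^2 / (2 * t)" for x
    proof -
      have "0 \<le> (cmod (w x) - t)^2" by simp
      hence "2 * t * cmod (w x) \<le> t^2 + (cmod (w x))^2" by (simp add: power2_eq_square algebra_simps)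
      thus ?thesis using t by (simp add: field_simps power2_eq_square)
    qed
    have "(LINT x|M. cmod (w x)) \<le> (LINT x|M. t / 2 + (cmod (w x))^2 / (2 * t))"
      by (rule integral_mono) (use iw wi pt in auto)
    also have "\<dots> = t / 2 + N / (2 * t)"
      using wi by (simp add: N_def prob_space)
    finally show ?thesis .
  qed
  show "(LINT x|M. cmod (w x)) \<le> sqrt (LINT x|M. (cmod (w x))^2)"
  proof (cases "N > 0")
    case True
    have "(LINT x|M. cmod (w x)) \<le> sqrt N / 2 + N / (2 * sqrt N)" using key[of "sqrt N"] True by simp
    also have "\<dots> = sqrt N" using True
      by (simp add: field_simps)
    finally show ?thesis by (simp add: N_def)
  next
    case False
    hence "N = 0" using N0 by simp
    have "(LINT x|M. cmod (w x)) \<le> t" if "t > 0" for t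
      using key[of "2 * t"] that \<open>N = 0\<close> by simp
    hence "(LINT x|M. cmod (w x)) \<le> 0"
      by (metis dense not_le)
    thus ?thesis using \<open>N = 0\<close> by (simp add: N_def)
  qed
qed

lemma inner_le_L1:
  assumes P: "prob_space M" and w: "sq_int M w" and u: "u \<in> borel_measurable M"
    and u1: "\<And>x. cmod (u x) = 1"
  shows "cmod (l2_inner M w u) \<le> sqrt (LINT x|M. (cmod (w x))^2)"
proof -
  have "cmod (l2_inner M w u) \<le> (LINT x|M. cmod (w x * cnj (u x)))"
    unfolding l2_inner_def by (rule integral_norm_bound)
  also have "\<dots> = (LINT x|M. cmod (w x))" by (simp add: norm_mult u1)
  also have "\<dots> \<le> sqrt (LINT x|M. (cmod (w x))^2)" by (rule L1_le_L2(2)[OF P w])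
  finally show ?thesis .
qed



locale onbc = onb M e L + prob_space M
  for M :: "'a measure" and e :: "'i \<Rightarrow> 'a \<Rightarrow> complex" and L :: "'i set" +
  assumes e_abs: "\<And>l x. l \<in> L \<Longrightarrow> cmod (e l x) = 1"
    and compl: "\<And>f. sq_int M f \<Longrightarrow> (\<forall>l\<in>L. l2_inner M f (e l) = 0) \<Longrightarrow> (AE x in M. f x = 0)"
begin

lemma sqrt_quarter: "sqrt (1/4) = (1/2::real)"
  by (rule real_sqrt_unique) (simp_all add: power2_eq_square)

lemma N_nonneg: "(LINT x|M. (cmod (f x))^2) \<ge> 0" by simp

lemma le_geom_zero:
  fixes x :: real
  assumes "\<And>k. k \<ge> K \<Longrightarrow> x \<le> (1/2)^k" shows "x \<le> 0"
proof -
  have "(\<lambda>k. (1/2::real)^k) \<longlonglongrightarrow> 0" by (rule LIMSEQ_power_zero) simp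
  moreover have "\<forall>\<^sub>F k in sequentially. x \<le> (1/2)^k"
    using assms by (auto simp: eventually_sequentially)
  ultimately show ?thesis by (rule tendsto_lowerbound) simp
qed

theorem parseval:
  assumes f: "sq_int M f"
  shows "((\<lambda>l. (cmod (l2_inner M f (e l)))^2) has_sum (LINT x|M. (cmod (f x))^2)) L"
proof -
  define c where "c l = l2_inner M f (e l)" for l
  define q where "q l = (cmod (c l))^2" for l
  define NF where "NF = (LINT x|M. (cmod (f x))^2)"
  have q0: "q l \<ge> 0" for l by (simp add: q_def)
  have bes: "sum q A \<le> NF" if "finite A" "A \<subseteq> L" for A
    using bessel_eq[OF f that] N_nonneg[of "\<lambda>x. f x - (\<Sum>l\<in>A. l2_inner M f (e l) * e l x)" ]
    by (simp add: q_def c_def NF_def)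
  have summ: "q summable_on L"
    by (rule nonneg_bdd_above_summable_on) (use q0 bes in \<open>auto simp: bdd_above_def\<close>)
  define Q where "Q = infsum q L"
  have hs: "(q has_sum Q) L" using summ by (simp add: Q_def)
  have fin_le: "sum q A \<le> Q" if "finite A" "A \<subseteq> L" for A
    unfolding Q_def by (rule finite_sum_le_infsum) (use summ that q0 in auto)
  have QNF: "Q \<le> NF"
    unfolding Q_def by (rule infsum_le_finite_sums) (use summ bes in auto)
  define ep where "ep k = (1/4::real)^k" for k :: nat
  have ep0: "ep k > 0" for k by (simp add: ep_def)
  have "\<exists>T. finite T \<and> T \<subseteq> L \<and> (\<forall>Y. finite Y \<and> T \<subseteq> Y \<and> Y \<subseteq> L \<longrightarrow> dist (sum q Y) Q < ep k)" for k
  proof -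
    have "\<forall>\<^sub>F Y in finite_subsets_at_top L. dist (sum q Y) Q < ep k"
      using hs ep0[of k] unfolding has_sum_def tendsto_iff by blast
    thus ?thesis unfolding eventually_finite_subsets_at_top by blast
  qed
  then obtain T where T: "\<And>k. finite (T k)" "\<And>k. T k \<subseteq> L"
    "\<And>k Y. finite Y \<Longrightarrow> T k \<subseteq> Y \<Longrightarrow> Y \<subseteq> L \<Longrightarrow> dist (sum q Y) Q < ep k"
    by metis
  define S where "S k = (\<Union>i\<le>k. T i)" for k
  have Sfin: "finite (S k)" for k using T(1) by (simp add: S_def)
  have SL: "S k \<subseteq> L" for k using T(2) by (auto simp: S_def)
  have Smono: "S k \<subseteq> S j" if "k \<le> j" for k j unfolding S_def by (rule UN_mono) (use that in auto)
  have tail: "Q - sum q (S k) < ep k" for k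
  proof -
    have "T k \<subseteq> S k" by (auto simp: S_def)
    from T(3)[OF Sfin this SL] show ?thesis by (simp add: dist_real_def abs_less_iff)
  qed
  define s where "s k x = (\<Sum>l\<in>S k. c l * e l x)" for k x
  have s_sq: "sq_int M (s k)" for k
    unfolding s_def by (rule sq_sum[OF Sfin SL])
  have s_diff: "s j x - s k x = (\<Sum>l\<in>S j - S k. c l * e l x)" if "k \<le> j" for j k x
    unfolding s_def using Smono[OF that] Sfin by (simp add: sum_diff)
  have Nsd: "(LINT x|M. (cmod (s j x - s k x))^2) \<le> ep k" if "k \<le> j" for j k
  proof -
    have "(LINT x|M. (cmod (s j x - s k x))^2) = (\<Sum>l\<in>S j - S k. (cmod (c l))^2)"
      unfolding s_diff[OF that] by (rule pyth) (use Sfin SL in auto)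
    also have "\<dots> = sum q (S j) - sum q (S k)"
      unfolding q_def using Smono[OF that] Sfin by (simp add: sum_diff)
    also have "\<dots> \<le> ep k" using fin_le[OF Sfin SL, of j] tail[of k] by simp
    finally show ?thesis .
  qed
  define d where "d k x = s (Suc k) x - s k x" for k x
  have d_sq: "sq_int M (d k)" for k unfolding d_def by (rule sq_int_diff[OF s_sq s_sq])
  have dm: "d k \<in> borel_measurable M" for k using d_sq by (simp add: sq_int_def)
  have dL1: "(LINT x|M. cmod (d k x)) \<le> (1/2)^k" for k
  proof -
    have "(LINT x|M. cmod (d k x)) \<le> sqrt (LINT x|M. (cmod (d k x))^2)"
      by (rule L1_le_L2(2)[OF prob_space_axioms d_sq])
    also have "\<dots> \<le> sqrt (ep k)" using Nsd[of k "Suc k"] by (simp add: d_def)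
    also have "sqrt (ep k) = (1/2)^k" by (simp add: ep_def real_sqrt_power sqrt_quarter)
    finally show ?thesis .
  qed
  have "(\<integral>\<^sup>+ x. (\<Sum>k. ennreal (cmod (d k x))) \<partial>M) = (\<Sum>k. \<integral>\<^sup>+ x. ennreal (cmod (d k x)) \<partial>M)"
    by (rule nn_integral_suminf) (use dm in measurable)
  also have "\<dots> = (\<Sum>k. ennreal (LINT x|M. cmod (d k x)))"
    by (rule arg_cong[where f=suminf], rule ext, rule nn_integral_eq_integral)
       (use L1_le_L2(1)[OF prob_space_axioms d_sq] in auto)
  also have "\<dots> \<le> (\<Sum>k. ennreal ((1/2)^k))"
    by (rule suminf_le) (use dL1 in \<open>auto intro: ennreal_leI\<close>)
  also have "\<dots> < \<infinity>"
  proof -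
    have "summable (\<lambda>k. (1/2::real)^k)" by (rule summable_geometric) simp
    hence "(\<Sum>k. ennreal ((1/2::real)^k)) \<noteq> \<top>" by (rule ennreal_suminf_neq_top) simp
    thus ?thesis unfolding infinity_ennreal_def by (rule less_top[THEN iffD1])
  qed
  finally have "(\<integral>\<^sup>+ x. (\<Sum>k. ennreal (cmod (d k x))) \<partial>M) \<noteq> \<infinity>" by simp
  hence "AE x in M. (\<Sum>k. ennreal (cmod (d k x))) \<noteq> \<infinity>"
    by (intro nn_integral_PInf_AE) (use dm in measurable)
  hence conv: "AE x in M. convergent (\<lambda>n. s n x)"
  proof (rule AE_mp, intro always_eventually allI impI)
    fix x assume "(\<Sum>k. ennreal (cmod (d k x))) \<noteq> \<infinity>"
    hence "summable (\<lambda>k. cmod (d k x))" by (intro summable_suminf_not_top) auto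
    hence "summable (\<lambda>k. d k x)" by (rule summable_norm_cancel)
    hence "convergent (\<lambda>n. \<Sum>k<n. d k x)" by (simp add: summable_iff_convergent)
    hence "convergent (\<lambda>n. s 0 x + (\<Sum>k<n. d k x))" by (intro convergent_add convergent_const)
    moreover have "s 0 x + (\<Sum>k<n. d k x) = s n x" for n
      unfolding d_def using sum_lessThan_telescope[of "\<lambda>k. s k x" n] by simp
    ultimately show "convergent (\<lambda>n. s n x)" by simp
  qed
  define phi where "phi x = lim (\<lambda>n. s n x)" for x
  have phi_lim: "AE x in M. (\<lambda>n. s n x) \<longlonglongrightarrow> phi x"
    using conv by eventually_elim (simp add: phi_def convergent_LIMSEQ_iff)
  have sm: "s k \<in> borel_measurable M" for k using s_sq by (simp add: sq_int_def)
  have phim: "phi \<in> borel_measurable M" unfolding phi_def using sm by measurable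
  have west: "sq_int M (\<lambda>x. phi x - s k x) \<and> (LINT x|M. (cmod (phi x - s k x))^2) \<le> ep k" for k
  proof -
    have wm: "(\<lambda>x. phi x - s k x) \<in> borel_measurable M" using phim sm by measurable
    have "(\<integral>\<^sup>+ x. ennreal ((cmod (phi x - s k x))^2) \<partial>M)
        = (\<integral>\<^sup>+ x. liminf (\<lambda>j. ennreal ((cmod (s j x - s k x))^2)) \<partial>M)"
    proof (rule nn_integral_cong_AE)
      show "AE x in M. ennreal ((cmod (phi x - s k x))^2) = liminf (\<lambda>j. ennreal ((cmod (s j x - s k x))^2))"
        using phi_lim
      proof eventually_elim
        case (elim x)
        have "(\<lambda>j. ennreal ((cmod (s j x - s k x))^2)) \<longlonglongrightarrow> ennreal ((cmod (phi x - s k x))^2)"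
          by (intro tendsto_intros elim)
        thus ?case by (intro lim_imp_Liminf[symmetric]) auto
      qed
    qed
    also have "\<dots> \<le> liminf (\<lambda>j. \<integral>\<^sup>+ x. ennreal ((cmod (s j x - s k x))^2) \<partial>M)"
      by (rule nn_integral_liminf) (use sm in measurable)
    also have "\<dots> \<le> ennreal (ep k)"
    proof -
      have "\<forall>\<^sub>F j in sequentially. (\<integral>\<^sup>+ x. ennreal ((cmod (s j x - s k x))^2) \<partial>M) \<le> ennreal (ep k)"
        unfolding eventually_sequentially
      proof (intro exI allI impI)
        fix j assume "k \<le> j"
        have "(\<integral>\<^sup>+ x. ennreal ((cmod (s j x - s k x))^2) \<partial>M)
              = ennreal (LINT x|M. (cmod (s j x - s k x))^2)"
          by (rule nn_integral_eq_integral)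
             (use sq_int_diff[OF s_sq s_sq, of j k] in \<open>auto simp: sq_int_def\<close>)
        also have "\<dots> \<le> ennreal (ep k)" using Nsd[OF \<open>k \<le> j\<close>] by (rule ennreal_leI)
        finally show "(\<integral>\<^sup>+ x. ennreal ((cmod (s j x - s k x))^2) \<partial>M) \<le> ennreal (ep k)" .
      qed
      hence "limsup (\<lambda>j. \<integral>\<^sup>+ x. ennreal ((cmod (s j x - s k x))^2) \<partial>M) \<le> ennreal (ep k)"
        by (rule Limsup_bounded)
      moreover have "liminf (\<lambda>j. \<integral>\<^sup>+ x. ennreal ((cmod (s j x - s k x))^2) \<partial>M)
          \<le> limsup (\<lambda>j. \<integral>\<^sup>+ x. ennreal ((cmod (s j x - s k x))^2) \<partial>M)"
        by (rule Liminf_le_Limsup) simp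
      ultimately show ?thesis by order
    qed
    finally have nn: "(\<integral>\<^sup>+ x. ennreal ((cmod (phi x - s k x))^2) \<partial>M) \<le> ennreal (ep k)" .
    have int: "integrable M (\<lambda>x. (cmod (phi x - s k x))^2)"
      by (rule integrableI_bounded) (use wm nn in \<open>auto simp: top.not_eq_extremum intro: le_less_trans\<close>)
    have "ennreal (LINT x|M. (cmod (phi x - s k x))^2) \<le> ennreal (ep k)"
      using nn nn_integral_eq_integral[OF int] by simp
    hence "(LINT x|M. (cmod (phi x - s k x))^2) \<le> ep k"
      using ep0[of k] by (simp add: ennreal_le_iff)
    thus ?thesis using int wm by (simp add: sq_int_def)
  qed
  have phi_sq: "sq_int M phi"
    using sq_int_add[OF conjunct1[OF west[of 0]] s_sq[of 0]] by simp
  have coef_s: "l2_inner M (s k) (e m) = (if m \<in> S k then c m else 0)" if "m \<in> L" for k m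
    unfolding s_def by (rule coef_sum[OF Sfin SL that])
  have coef_bd: "cmod (l2_inner M phi (e m) - l2_inner M (s k) (e m)) \<le> (1/2)^k" if m: "m \<in> L" for k m
  proof -
    have em: "e m \<in> borel_measurable M" using e_sq[OF m] by (simp add: sq_int_def)
    have "l2_inner M phi (e m) = l2_inner M (\<lambda>x. (phi x - s k x) + 1 * s k x) (e m)" by simp
    also have "\<dots> = l2_inner M (\<lambda>x. phi x - s k x) (e m) + 1 * l2_inner M (s k) (e m)"
      by (rule l2_inner_lin) (use west s_sq e_sq m in auto)
    finally have "l2_inner M phi (e m) - l2_inner M (s k) (e m) = l2_inner M (\<lambda>x. phi x - s k x) (e m)"
      by simp
    also have "cmod \<dots> \<le> sqrt (LINT x|M. (cmod (phi x - s k x))^2)"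
      by (rule inner_le_L1[OF prob_space_axioms _ em e_abs[OF m]]) (use west in auto)
    also have "\<dots> \<le> sqrt (ep k)" using west[of k] by simp
    also have "sqrt (ep k) = (1/2)^k" by (simp add: ep_def real_sqrt_power sqrt_quarter)
    finally show ?thesis .
  qed
  have coef_phi: "l2_inner M phi (e m) = c m" if m: "m \<in> L" for m
  proof (cases "\<exists>K. m \<in> S K")
    case True
    then obtain K where K: "m \<in> S K" by blast
    have "cmod (l2_inner M phi (e m) - c m) \<le> 0"
    proof (rule le_geom_zero)
      fix k assume "K \<le> k"
      hence "m \<in> S k" using Smono K by blast
      thus "cmod (l2_inner M phi (e m) - c m) \<le> (1/2)^k"
        using coef_bd[OF m, of k] coef_s[OF m, of k] by simp
    qed
    thus ?thesis by simp
  next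
    case False
    have "cmod (l2_inner M phi (e m)) \<le> 0"
    proof (rule le_geom_zero[of 0])
      fix k :: nat
      show "cmod (l2_inner M phi (e m)) \<le> (1/2)^k"
        using coef_bd[OF m, of k] coef_s[OF m, of k] False by simp
    qed
    moreover have "q m \<le> 0"
    proof -
      have "q m \<le> (1/2)^k" for k
      proof -
        have "sum q (insert m (S k)) \<le> Q" using fin_le[of "insert m (S k)"] Sfin SL m by auto
        hence "q m + sum q (S k) \<le> Q" using False Sfin by simp
        hence "q m < ep k" using tail[of k] by simp
        moreover have "ep k \<le> (1/2)^k" unfolding ep_def by (rule power_mono) auto
        ultimately show ?thesis by simp
      qed
      thus ?thesis by (intro le_geom_zero[of 0]) auto
    qed
    ultimately show ?thesis using q0[of m] by (simp add: q_def)
  qed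
  have fphi: "AE x in M. f x = phi x"
  proof -
    have sd: "sq_int M (\<lambda>x. f x - phi x)" by (rule sq_int_diff[OF f phi_sq])
    have "l2_inner M (\<lambda>x. f x - phi x) (e m) = 0" if m: "m \<in> L" for m
    proof -
      have "l2_inner M (\<lambda>x. f x + (-1) * phi x) (e m) = l2_inner M f (e m) + (-1) * l2_inner M phi (e m)"
        by (rule l2_inner_lin) (use f phi_sq e_sq m in auto)
      thus ?thesis using coef_phi[OF m] by (simp add: c_def)
    qed
    hence "AE x in M. f x - phi x = 0" using compl[OF sd] by blast
    thus ?thesis by auto
  qed
  have "NF \<le> Q"
  proof -
    have "NF - Q \<le> (1/2)^k" for k
    proof -
      have "NF - sum q (S k) = (LINT x|M. (cmod (f x - s k x))^2)"
        using bessel_eq[OF f Sfin SL, of k] by (simp add: NF_def q_def c_def s_def)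
      also have "\<dots> = (LINT x|M. (cmod (phi x - s k x))^2)"
        by (rule integral_cong_AE) (use fphi f s_sq phim sm in \<open>auto simp: sq_int_def\<close>)
      also have "\<dots> \<le> ep k" using west by blast
      also have "ep k \<le> (1/2)^k" unfolding ep_def by (rule power_mono) auto
      finally show ?thesis using fin_le[OF Sfin SL, of k] by simp
    qed
    hence "NF - Q \<le> 0" by (intro le_geom_zero[of 0]) auto
    thus ?thesis by simp
  qed
  hence "Q = NF" using QNF by simp
  moreover have "q = (\<lambda>l. (cmod (l2_inner M f (e l)))^2)" by (simp add: fun_eq_iff q_def c_def)
  ultimately show ?thesis using hs by (simp add: NF_def)
qed

end


lemma expo_comm: "expo l x = expo x l"
  by (simp add: expo_def inner_commute)

lemma expo_abs[simp]: "cmod (expo l x) = 1"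
  unfolding expo_def by (simp add: norm_exp_eq_Re)

lemma expo_add: "expo a (x + y) = expo a x * expo a y"
  unfolding expo_def by (simp add: inner_add_right distrib_left exp_add)

lemma expo_cont: "continuous_on UNIV (expo l)"
  unfolding expo_def by (intro continuous_intros)

lemma expo_meas: "sets \<mu> = sets borel \<Longrightarrow> expo l \<in> borel_measurable \<mu>"
  using borel_measurable_continuous_onI[OF expo_cont, of l] measurable_cong_sets[of \<mu> borel borel borel]
  by simp

lemma expo_sq: assumes "prob_space \<mu>" "sets \<mu> = sets borel" shows "sq_int \<mu> (expo l)"
proof -
  interpret prob_space \<mu> by fact
  show ?thesis unfolding sq_int_def using expo_meas[OF assms(2), of l] by simp
qed

lemma expo_bohr: "expo a \<in> bohr_group"
  unfolding bohr_group_def by (simp add: expo_add)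

lemma bohr_act_eq: "bohr_act a = (\<lambda>h x. expo a x * h x)"
  by (simp add: fun_eq_iff bohr_act_def)

locale haar_ctx =
  fixes M :: "(real^'n \<Rightarrow> complex) measure" and a :: "real^'n"
  assumes haar: "bohr_haar M"
begin

lemma space_M: "space M = bohr_group" using haar by (simp add: bohr_haar_def)

lemma prob: "prob_space M" using haar by (simp add: bohr_haar_def)

lemma act_meas: "bohr_act a \<in> measurable M M"
proof (rule measurableI)
  fix h assume "h \<in> space M"
  hence "h \<in> bohr_group" by (simp add: space_M)
  thus "bohr_act a h \<in> space M"
    unfolding space_M bohr_group_def bohr_act_def by (simp add: norm_mult expo_add)
next
  fix A assume "A \<in> sets M"
  thus "bohr_act a -` A \<inter> space M \<in> sets M"
    using haar expo_bohr[of a] unfolding bohr_haar_def bohr_act_eq by auto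
qed

lemma distr_eq: "distr M M (bohr_act a) = M"
proof (rule measure_eqI)
  fix A assume "A \<in> sets (distr M M (bohr_act a))"
  hence A: "A \<in> sets M" by simp
  have "emeasure (distr M M (bohr_act a)) A = emeasure M (bohr_act a -` A \<inter> space M)"
    by (rule emeasure_distr[OF act_meas A])
  also have "\<dots> = emeasure M A"
    using haar expo_bohr[of a] A unfolding bohr_haar_def bohr_act_eq by auto
  finally show "emeasure (distr M M (bohr_act a)) A = emeasure M A" .
qed simp

lemma AE_act:
  assumes "AE h in M. P h" shows "AE h in M. P (bohr_act a h)"
proof -
  from assms obtain N where N: "{h \<in> space M. \<not> P h} \<subseteq> N" "N \<in> sets M" "emeasure M N = 0"
    by (auto elim: AE_E)
  show ?thesis
  proof (rule AE_I)
    show "{h \<in> space M. \<not> P (bohr_act a h)} \<subseteq> bohr_act a -` N \<inter> space M"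
      using N(1) measurable_space[OF act_meas] by auto
    have "emeasure M (bohr_act a -` N \<inter> space M) = emeasure (distr M M (bohr_act a)) N"
      by (rule emeasure_distr[OF act_meas N(2), symmetric])
    also have "\<dots> = 0" using N(3) by (simp add: distr_eq)
    finally show "emeasure M (bohr_act a -` N \<inter> space M) = 0" .
    show "bohr_act a -` N \<inter> space M \<in> sets M" using act_meas N(2) by (rule measurable_sets)
  qed
qed

lemma sq_act:
  assumes "sq_int M u"
  shows "sq_int M (\<lambda>h. u (bohr_act a h))"
    and "(LINT h|M. (cmod (u (bohr_act a h)))^2) = (LINT h|M. (cmod (u h))^2)"
proof -
  have um: "u \<in> borel_measurable M" and ui: "integrable M (\<lambda>h. (cmod (u h))^2)"
    using assms by (auto simp: sq_int_def)
  have m: "(\<lambda>h. u (bohr_act a h)) \<in> borel_measurable M"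
    by (rule measurable_compose[OF act_meas um])
  have m2: "(\<lambda>h. (cmod (u h))^2) \<in> borel_measurable M" using um by measurable
  have "integrable (distr M M (bohr_act a)) (\<lambda>h. (cmod (u h))^2)" using ui by (simp add: distr_eq)
  hence "integrable M (\<lambda>h. (cmod (u (bohr_act a h)))^2)"
    using integrable_distr_eq[OF act_meas m2] by simp
  thus "sq_int M (\<lambda>h. u (bohr_act a h))" using m by (simp add: sq_int_def)
  have "(LINT h|distr M M (bohr_act a). (cmod (u h))^2) = (LINT h|M. (cmod (u (bohr_act a h)))^2)"
    by (rule integral_distr[OF act_meas m2])
  thus "(LINT h|M. (cmod (u (bohr_act a h)))^2) = (LINT h|M. (cmod (u h))^2)"
    by (simp add: distr_eq)
qed

end



theorem theorem4p11:
  fixes \<mu> :: "(real^'n) measure" and \<Lambda> :: "(real^'n) set"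
    and M :: "(real^'n \<Rightarrow> complex) measure"
    and W :: "(real^'n \<Rightarrow> complex) \<Rightarrow> (real^'n \<Rightarrow> complex) \<Rightarrow> complex"
  assumes prob: "prob_space \<mu>" and borel: "sets \<mu> = sets borel"
    and spec: "spectral \<mu> \<Lambda>"
    and haar: "bohr_haar M"
    and W_L2: "\<And>f. sq_int \<mu> f \<Longrightarrow> sq_int M (W f)"
    and W_wd: "\<And>f g. sq_int \<mu> f \<Longrightarrow> sq_int \<mu> g \<Longrightarrow> (AE x in \<mu>. f x = g x)
                 \<Longrightarrow> (AE h in M. W f h = W g h)"
    and W_lin: "\<And>f g c. sq_int \<mu> f \<Longrightarrow> sq_int \<mu> g
                 \<Longrightarrow> (AE h in M. W (\<lambda>x. f x + c * g x) h = W f h + c * W g h)"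
    and W_isom: "\<And>f. sq_int \<mu> f \<Longrightarrow>
                 (LINT h|M. (cmod (W f h))^2) = (LINT x|\<mu>. (cmod (f x))^2)"
    and W_exp: "\<And>l. l \<in> \<Lambda> \<Longrightarrow> (AE h in M. W (expo l) h = h l)"
  shows "\<forall>a f g. sq_int \<mu> f \<and> sq_int \<mu> g \<and> local_transl \<mu> \<Lambda> a f g \<longrightarrow>
           (AE h in M. W f (bohr_act a h) = W g h)"
proof (intro allI impI, elim conjE)
  fix a f g
  assume f: "sq_int \<mu> f" and g: "sq_int \<mu> g" and lt: "local_transl \<mu> \<Lambda> a f g"
  interpret H: haar_ctx M a by unfold_locales (rule haar)
  interpret PM: prob_space M by (rule H.prob)
  have esq: "\<And>l. sq_int \<mu> (expo l)" by (rule expo_sq[OF prob borel])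
  interpret O: onbc \<mu> expo \<Lambda>
  proof -
    have "onb \<mu> expo \<Lambda>" by unfold_locales (use esq spec in \<open>auto simp: spectral_def\<close>)
    moreover have "onbc_axioms \<mu> expo \<Lambda>" by unfold_locales (use spec in \<open>auto simp: spectral_def\<close>)
    ultimately show "onbc \<mu> expo \<Lambda>" using prob by (simp add: onbc_def)
  qed

  have W0: "AE h in M. W (\<lambda>x. 0) h = 0"
  proof -
    have i: "(LINT h|M. (cmod (W (\<lambda>x. 0) h))^2) = 0" using W_isom[OF sq_int_zero] by simp
    have "integrable M (\<lambda>h. (cmod (W (\<lambda>x. 0) h))^2)" using W_L2[OF sq_int_zero] by (simp add: sq_int_def)
    hence "AE h in M. (cmod (W (\<lambda>x. 0) h))^2 = 0"
      using integral_nonneg_eq_0_iff_AE[of M "\<lambda>h. (cmod (W (\<lambda>x. 0) h))^2"] i by simp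
    thus ?thesis by simp
  qed
  have Wsum: "AE h in M. W (\<lambda>x. \<Sum>l\<in>A. d l * expo l x) h = (\<Sum>l\<in>A. d l * h l)"
    if "finite A" "A \<subseteq> \<Lambda>" for A d
    using that
  proof (induction A rule: finite_induct)
    case empty
    thus ?case using W0 by simp
  next
    case (insert i A)
    have fe: "(\<lambda>x. \<Sum>l\<in>insert i A. d l * expo l x) = (\<lambda>x. (\<Sum>l\<in>A. d l * expo l x) + d i * expo i x)"
      using insert by (simp add: fun_eq_iff add.commute)
    have "AE h in M. W (\<lambda>x. (\<Sum>l\<in>A. d l * expo l x) + d i * expo i x) h
                 = W (\<lambda>x. \<Sum>l\<in>A. d l * expo l x) h + d i * W (expo i) h"
      by (rule W_lin) (use esq in \<open>auto intro!: sq_int_sum\<close>)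
    moreover have "AE h in M. W (\<lambda>x. \<Sum>l\<in>A. d l * expo l x) h = (\<Sum>l\<in>A. d l * h l)"
      using insert by auto
    moreover have "AE h in M. W (expo i) h = h i" using W_exp insert by auto
    ultimately show ?case unfolding fe
      by eventually_elim (use insert in \<open>simp add: add.commute\<close>)
  qed
  have Wdiff: "AE h in M. W u h = W (\<lambda>x. u x - v x) h + W v h" if "sq_int \<mu> u" "sq_int \<mu> v" for u v
  proof -
    have "AE h in M. W (\<lambda>x. (u x - v x) + 1 * v x) h = W (\<lambda>x. u x - v x) h + 1 * W v h"
      by (rule W_lin) (use that sq_int_diff in auto)
    thus ?thesis by simp
  qed

  define c where "c l = l2_inner \<mu> f (expo l)" for l
  define fS where "fS S x = (\<Sum>l\<in>S. c l * expo l x)" for S x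
  define gS where "gS S x = (\<Sum>l\<in>S. expo l a * c l * expo l x)" for S x
  define N where "N u = (LINT x|\<mu>. (cmod (u x))^2)" for u
  define D where "D h = W f (bohr_act a h) - W g h" for h

  have limf: "((\<lambda>S. N (\<lambda>x. f x - fS S x)) \<longlongrightarrow> 0) (finite_subsets_at_top \<Lambda>)"
  proof -
    have hs: "((\<lambda>l. (cmod (c l))^2) has_sum N f) \<Lambda>"
      using O.parseval[OF f] by (simp add: c_def N_def)
    hence "((\<lambda>S. N f - (\<Sum>l\<in>S. (cmod (c l))^2)) \<longlongrightarrow> N f - N f) (finite_subsets_at_top \<Lambda>)"
      unfolding has_sum_def by (intro tendsto_intros)
    moreover have "\<forall>\<^sub>F S in finite_subsets_at_top \<Lambda>. N f - (\<Sum>l\<in>S. (cmod (c l))^2) = N (\<lambda>x. f x - fS S x)"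
      by (intro eventually_finite_subsets_at_top_weakI) (simp only: N_def fS_def c_def O.bessel_eq[OF f])
    ultimately show ?thesis by (simp add: tendsto_cong)
  qed
  have limg: "((\<lambda>S. N (\<lambda>x. g x - gS S x)) \<longlongrightarrow> 0) (finite_subsets_at_top \<Lambda>)"
    using lt unfolding local_transl_def l2_has_sum_def N_def gS_def c_def .

  have Dm: "D \<in> borel_measurable M"
  proof -
    have "(\<lambda>h. W f (bohr_act a h)) \<in> borel_measurable M"
      using H.sq_act(1)[OF W_L2[OF f]] by (simp add: sq_int_def)
    moreover have "W g \<in> borel_measurable M" using W_L2[OF g] by (simp add: sq_int_def)
    ultimately show ?thesis unfolding D_def by measurable
  qed
  have est: "integrable M (\<lambda>h. (cmod (D h))^2) \<and> (LINT h|M. (cmod (D h))^2) \<le> 2 * N (\<lambda>x. f x - fS S x) + 2 * N (\<lambda>x. g x - gS S x)"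
    if S: "finite S" "S \<subseteq> \<Lambda>" for S
  proof -
    have fSs: "sq_int \<mu> (fS S)" unfolding fS_def by (rule O.sq_sum[OF S])
    have gSs: "sq_int \<mu> (gS S)" unfolding gS_def by (rule O.sq_sum[OF S])
    have xs: "sq_int \<mu> (\<lambda>x. f x - fS S x)" by (rule sq_int_diff[OF f fSs])
    have ys: "sq_int \<mu> (\<lambda>x. g x - gS S x)" by (rule sq_int_diff[OF g gSs])
    define X where "X = W (\<lambda>x. f x - fS S x)"
    define Y where "Y = W (\<lambda>x. g x - gS S x)"
    have a1: "AE h in M. W (fS S) h = (\<Sum>l\<in>S. c l * h l)"
      unfolding fS_def by (rule Wsum[OF S])
    have a2: "AE h in M. W (gS S) h = (\<Sum>l\<in>S. expo l a * c l * h l)"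
      unfolding gS_def by (rule Wsum[OF S])
    have a3: "AE h in M. W (fS S) (bohr_act a h) = (\<Sum>l\<in>S. c l * bohr_act a h l)"
      by (rule H.AE_act[OF a1])
    have a4: "AE h in M. W f h = X h + W (fS S) h" unfolding X_def by (rule Wdiff[OF f fSs])
    have a5: "AE h in M. W f (bohr_act a h) = X (bohr_act a h) + W (fS S) (bohr_act a h)"
      by (rule H.AE_act[OF a4])
    have a6: "AE h in M. W g h = Y h + W (gS S) h" unfolding Y_def by (rule Wdiff[OF g gSs])
    have ptw: "AE h in M. (cmod (D h))^2 \<le> 2 * (cmod (X (bohr_act a h)))^2 + 2 * (cmod (Y h))^2"
      using a2 a3 a5 a6
    proof eventually_elim
      case (elim h)
      have "W (fS S) (bohr_act a h) = W (gS S) h"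
        using elim by (simp add: bohr_act_def expo_comm[of a] mult.commute mult.left_commute)
      hence "D h = X (bohr_act a h) + (-1) * Y h" using elim by (simp add: D_def)
      hence "cmod (D h) \<le> cmod (X (bohr_act a h)) + 1 * cmod (Y h)"
        by (simp add: norm_triangle_ineq4)
      hence "(cmod (D h))^2 \<le> (cmod (X (bohr_act a h)) + 1 * cmod (Y h))^2"
        by (simp add: power_mono)
      also have "\<dots> \<le> 2 * (cmod (X (bohr_act a h)))^2 + 2 * 1^2 * (cmod (Y h))^2"
        by (rule sq_sum_le)
      finally show ?case by simp
    qed
    have Xs: "sq_int M X" unfolding X_def by (rule W_L2[OF xs])
    have Ys: "sq_int M Y" unfolding Y_def by (rule W_L2[OF ys])
    have iX: "integrable M (\<lambda>h. (cmod (X (bohr_act a h)))^2)"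
      using H.sq_act(1)[OF Xs] by (simp add: sq_int_def)
    have iY: "integrable M (\<lambda>h. (cmod (Y h))^2)" using Ys by (simp add: sq_int_def)
    have iR: "integrable M (\<lambda>h. 2 * (cmod (X (bohr_act a h)))^2 + 2 * (cmod (Y h))^2)"
      using iX iY by simp
    have iD: "integrable M (\<lambda>h. (cmod (D h))^2)"
      by (rule Bochner_Integration.integrable_bound[OF iR]) (use Dm ptw in auto)
    have "(LINT h|M. (cmod (D h))^2) \<le> (LINT h|M. 2 * (cmod (X (bohr_act a h)))^2 + 2 * (cmod (Y h))^2)"
      by (rule integral_mono_AE[OF iD iR ptw])
    also have "\<dots> = 2 * (LINT h|M. (cmod (X (bohr_act a h)))^2) + 2 * (LINT h|M. (cmod (Y h))^2)"
      using iX iY by simp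
    also have "(LINT h|M. (cmod (X (bohr_act a h)))^2) = N (\<lambda>x. f x - fS S x)"
      using H.sq_act(2)[OF Xs] W_isom[OF xs] by (simp add: X_def N_def)
    also have "(LINT h|M. (cmod (Y h))^2) = N (\<lambda>x. g x - gS S x)"
      using W_isom[OF ys] by (simp add: Y_def N_def)
    finally show ?thesis using iD by simp
  qed
  have "(LINT h|M. (cmod (D h))^2) \<le> 2 * 0 + 2 * 0"
  proof (rule tendsto_le[OF finite_subsets_at_top_neq_bot])
    show "((\<lambda>S. 2 * N (\<lambda>x. f x - fS S x) + 2 * N (\<lambda>x. g x - gS S x)) \<longlongrightarrow> 2 * 0 + 2 * 0)
            (finite_subsets_at_top \<Lambda>)"
      by (intro tendsto_intros limf limg)
    show "((\<lambda>S. LINT h|M. (cmod (D h))^2) \<longlongrightarrow> (LINT h|M. (cmod (D h))^2)) (finite_subsets_at_top \<Lambda>)"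
      by simp
    show "\<forall>\<^sub>F S in finite_subsets_at_top \<Lambda>.
            (LINT h|M. (cmod (D h))^2) \<le> 2 * N (\<lambda>x. f x - fS S x) + 2 * N (\<lambda>x. g x - gS S x)"
      by (rule eventually_finite_subsets_at_top_weakI) (use est in blast)
  qed
  moreover have "(LINT h|M. (cmod (D h))^2) \<ge> 0" by (rule Bochner_Integration.integral_nonneg) simp
  ultimately have I0: "(LINT h|M. (cmod (D h))^2) = 0" by simp
  have iD: "integrable M (\<lambda>h. (cmod (D h))^2)"
    using est[of "{}"] by simp
  have "AE h in M. (cmod (D h))^2 = 0"
    using integral_nonneg_eq_0_iff_AE[OF iD] I0 by simp
  thus "AE h in M. W f (bohr_act a h) = W g h"
    by eventually_elim (simp add: D_def)
qed
end
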